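(* For any configuration $\mathcal{C}$ of $d$ doors there is a knock sequence $\pi$ such that $\mathbb{T}_{\mathcal{C}}(\pi)\le\mathbb{T}_{\mathcal{C}}(\pi')$ for every knock sequence $\pi'$.
   Context: Dependent doors model. Fix an integer $d\ge 2$ and doors $1,\dots,d$, all initially closed; once a door opens it stays open forever. A configuration $\mathcal{C}$ specifies for each door $i$ a function $\phi_i^{\mathcal{C}}$ mapping every finite nonempty sequence $(X_1,\dots,X_n)$ of subsets of $\{1,\dots,i-1\}$ to $[0,1]$: $\phi_i^{\mathcal{C}}(X_1,\dots,X_n)$ is the probability that door $i$ has opened during $n$ knocks on it, where $X_j$ is the set of open doors among $\{1,\dots,i-1\}$ at the time of the $j$-th knock on door $i$ (so a closed door $i$ opens at its $n$-th knock with conditional probability $(\phi_i(X_1..X_n)-\phi_i(X_1..X_{n-1}))/(1-\phi_i(X_1..X_{n-1}))$, with $\phi_i$ of the empty sequence equal to $0$). Configurations are assumed monotone ($\phi_i(X')\le\phi_i(X)$ whenever $X'$ is a, not necessarily consecutive, subsequence of $X$) and positively correlated ($\phi_i(X'_1,\dots,X'_n)\le\phi_i(X_1,\dots,X_n)$ whenever $X'_j\subseteq X_j$ for all $j$). The fundamental distribution of door $i$ is $p_i(n)=1-\phi_i(\{1,\dots,i-1\}^n)$ ($p_i(0)=1$), and $E_i=\sum_{n\ge0}p_i(n)$ is assumed finite. A knock sequence $\pi$ is an infinite sequence of door indices, executed in order without any feedback; $\mathbb{T}_{\mathcal{C}}(\pi)$ is the expected number of knocks until all $d$ doors are open. *)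

theory Defs
  imports "HOL-Probability.Probability" "HOL-Library.Sublist"
begin

text \<open>A configuration is a function phi with phi i Xs the probability
that door i has opened during length Xs knocks, Xs listing the sets of open doors among
1..i-1 at the times of those knocks.  phi is only meaningful on nonempty lists; the value
on the empty list is fixed to 0 by phi_ext.\<close>

definition phi_ext :: "(nat \<Rightarrow> nat set list \<Rightarrow> real) \<Rightarrow> nat \<Rightarrow> nat set list \<Rightarrow> real" where
  "phi_ext \<phi> i Xs = (if Xs = [] then 0 else \<phi> i Xs)"

definition fund_dist :: "(nat \<Rightarrow> nat set list \<Rightarrow> real) \<Rightarrow> nat \<Rightarrow> nat \<Rightarrow> real" where
  "fund_dist \<phi> i n = 1 - phi_ext \<phi> i (replicate n {1..<i})"

definition door_config :: "nat \<Rightarrow> (nat \<Rightarrow> nat set list \<Rightarrow> real) \<Rightarrow> bool" where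
  "door_config d \<phi> \<longleftrightarrow>
    (\<forall>i\<in>{1..d}.
       (\<forall>Xs. Xs \<noteq> [] \<and> set Xs \<subseteq> Pow {1..<i} \<longrightarrow> 0 \<le> \<phi> i Xs \<and> \<phi> i Xs \<le> 1)
     \<and> (\<forall>Xs Ys. Xs \<noteq> [] \<and> Ys \<noteq> [] \<and> set Xs \<subseteq> Pow {1..<i} \<and> set Ys \<subseteq> Pow {1..<i}
                 \<and> subseq Ys Xs \<longrightarrow> \<phi> i Ys \<le> \<phi> i Xs)
     \<and> (\<forall>Xs Ys. Xs \<noteq> [] \<and> set Xs \<subseteq> Pow {1..<i} \<and> list_all2 (\<subseteq>) Ys Xs
                 \<longrightarrow> \<phi> i Ys \<le> \<phi> i Xs)
     \<and> summable (fund_dist \<phi> i))"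

text \<open>Conditional probability that a closed door i opens at the n-th knock, given the
list Xs = [X_1,...,X_n].\<close>
definition cond_open_prob :: "(nat \<Rightarrow> nat set list \<Rightarrow> real) \<Rightarrow> nat \<Rightarrow> nat set list \<Rightarrow> real" where
  "cond_open_prob \<phi> i Xs =
     (phi_ext \<phi> i Xs - phi_ext \<phi> i (butlast Xs)) / (1 - phi_ext \<phi> i (butlast Xs))"

text \<open>Distribution of the history [S_0, ..., S_t] of sets of open doors after t knocks of
the knock sequence pi (knock number t+1 is on door pi t).\<close>
fun open_hist :: "(nat \<Rightarrow> nat set list \<Rightarrow> real) \<Rightarrow> (nat \<Rightarrow> nat) \<Rightarrow> nat \<Rightarrow> nat set list pmf" where
  "open_hist \<phi> \<pi> 0 = return_pmf [{}]"
| "open_hist \<phi> \<pi> (Suc t) = open_hist \<phi> \<pi> t \<bind> (\<lambda>hs.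
     let S = last hs; i = \<pi> t in
     if i \<in> S then return_pmf (hs @ [S])
     else map_pmf (\<lambda>b. if b then hs @ [insert i S] else hs @ [S])
            (bernoulli_pmf (cond_open_prob \<phi> i
               [hs ! j \<inter> {1..<i}. j \<leftarrow> [0..<Suc t], \<pi> j = i])))"

text \<open>Expected number of knocks until all doors are open: sum over t of the probability
that not all doors are open after t knocks (possibly infinite).\<close>
definition expected_knocks :: "nat \<Rightarrow> (nat \<Rightarrow> nat set list \<Rightarrow> real) \<Rightarrow> (nat \<Rightarrow> nat) \<Rightarrow> ennreal" where
  "expected_knocks d \<phi> \<pi> =
     (\<Sum>t. ennreal (measure_pmf.prob (open_hist \<phi> \<pi> t) {hs. last hs \<noteq> {1..d}}))"

definition knock_seq :: "nat \<Rightarrow> (nat \<Rightarrow> nat) \<Rightarrow> bool" where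
  "knock_seq d \<pi> \<longleftrightarrow> (\<forall>t. \<pi> t \<in> {1..d})"

end

theory Submission imports Defs begin
lemma hist_dep: "(\<forall>j<t. \<pi> j = \<pi>' j) \<Longrightarrow> open_hist \<phi> \<pi> t = open_hist \<phi> \<pi>' t"
proof (induction t)
  case 0 then show ?case by simp
next
  case (Suc t)
  have IH: "open_hist \<phi> \<pi> t = open_hist \<phi> \<pi>' t" using Suc by simp
  have e: "\<pi> t = \<pi>' t" using Suc.prems by simp
  have l: "[f j. j \<leftarrow> [0..<Suc t], \<pi> j = i] = [f j. j \<leftarrow> [0..<Suc t], \<pi>' j = i]" for i and f :: "nat \<Rightarrow> nat set"
    by (intro arg_cong[where f=concat] map_cong refl) (metis Suc.prems atLeastLessThan_iff set_upt)
  show ?case by (simp only: open_hist.simps IH e l)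
qed

definition ext :: "nat \<Rightarrow> nat \<Rightarrow> (nat \<Rightarrow> nat) \<Rightarrow> (nat \<Rightarrow> nat) set" where
  "ext d n p = {\<pi>. knock_seq d \<pi> \<and> (\<forall>j<n. \<pi> j = p j)}"

lemma ext_split: "ext d n p = (\<Union>c\<in>{1..d}. ext d (Suc n) (p(n:=c)))"
proof
  show "ext d n p \<subseteq> (\<Union>c\<in>{1..d}. ext d (Suc n) (p(n:=c)))"
  proof
    fix x assume x: "x \<in> ext d n p"
    then have "x n \<in> {1..d}" "x \<in> ext d (Suc n) (p(n:=x n))"
      unfolding ext_def knock_seq_def by (auto simp: less_Suc_eq)
    then show "x \<in> (\<Union>c\<in>{1..d}. ext d (Suc n) (p(n:=c)))" by blast
  qed
  show "(\<Union>c\<in>{1..d}. ext d (Suc n) (p(n:=c))) \<subseteq> ext d n p"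
    unfolding ext_def by auto
qed

lemma step:
  assumes "d \<ge> 1"
  shows "\<exists>c\<in>{1..d}. (INF \<pi>\<in>ext d (Suc n) (p(n:=c)). f \<pi>) = (INF \<pi>\<in>ext d n p. (f \<pi> :: ennreal))"
proof -
  let ?A = "(\<lambda>c. INF \<pi>\<in>ext d (Suc n) (p(n:=c)). f \<pi>) ` {1..d}"
  have "(INF \<pi>\<in>ext d n p. f \<pi>) = Inf ?A"
    unfolding ext_split[of d n p]
  proof (rule antisym)
    show "(INF \<pi>\<in>(\<Union>c\<in>{1..d}. ext d (Suc n) (p(n:=c))). f \<pi>) \<le> Inf ?A"
      by (rule INF_greatest, rule INF_superset_mono) auto
    show "Inf ?A \<le> (INF \<pi>\<in>(\<Union>c\<in>{1..d}. ext d (Suc n) (p(n:=c))). f \<pi>)"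
    proof (rule INF_greatest)
      fix x assume "x \<in> (\<Union>c\<in>{1..d}. ext d (Suc n) (p(n:=c)))"
      then obtain c where c: "c \<in> {1..d}" "x \<in> ext d (Suc n) (p(n:=c))" by blast
      show "Inf ?A \<le> f x"
        by (rule INF_lower2[OF c(1)], rule INF_lower[OF c(2)])
    qed
  qed
  moreover have "Inf ?A \<in> ?A"
    proof (rule finite_Inf_in)
    show "finite ?A" by simp
    show "?A \<noteq> {}" using assms by auto
    fix x y assume "x \<in> ?A" "y \<in> ?A"
    then show "inf x y \<in> ?A" by (cases "x \<le> y") (simp_all add: inf_absorb1 inf_absorb2)
  qed
  ultimately show ?thesis by auto
qed

lemma ext_cong: "\<forall>j<n. p j = q j \<Longrightarrow> ext d n p = ext d n q"
  unfolding ext_def by auto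

theorem mainTheorem8:
  fixes d :: nat and \<phi> :: "nat \<Rightarrow> nat set list \<Rightarrow> real"
  assumes "d \<ge> 2" and "door_config d \<phi>"
  shows "\<exists>\<pi>. knock_seq d \<pi> \<and>
           (\<forall>\<pi>'. knock_seq d \<pi>' \<longrightarrow> expected_knocks d \<phi> \<pi> \<le> expected_knocks d \<phi> \<pi>')"
proof -
  define E where "E = expected_knocks d \<phi>"
  define F where "F = (\<lambda>n p. INF \<pi>\<in>ext d n p. E \<pi>)"
  have d1: "d \<ge> 1" using assms by simp
  define ch where "ch = (\<lambda>n p. SOME c. c \<in> {1..d} \<and> F (Suc n) (p(n:=c)) = F n p)"
  have ch: "ch n p \<in> {1..d} \<and> F (Suc n) (p(n:=ch n p)) = F n p" for n p
  proof -
    have "\<exists>c. c \<in> {1..d} \<and> F (Suc n) (p(n:=c)) = F n p"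
      using step[OF d1, where n=n and p=p and f=E] unfolding F_def by blast
    from someI_ex[OF this] show ?thesis unfolding ch_def .
  qed
  define q where "q = rec_nat (\<lambda>_. 1::nat) (\<lambda>n p. p(n := ch n p))"
  have q0: "q 0 = (\<lambda>_. 1)" and qS: "q (Suc n) = (q n)(n := ch n (q n))" for n
    by (simp_all add: q_def)
  define \<pi> where "\<pi> = (\<lambda>n. q (Suc n) n)"
  have agree: "\<forall>j<n. q (n + k) j = q n j" for n k
    by (induction k) (auto simp: qS)
  have agree2: "\<forall>j<n. \<pi> j = q n j" for n
  proof (intro allI impI)
    fix j assume "j < n"
    define k where "k = n - Suc j"
    have "n = Suc j + k" using \<open>j < n\<close> by (simp add: k_def)
    then show "\<pi> j = q n j" unfolding \<pi>_def using agree[of "Suc j" k] by simp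
  qed
  have Fq: "F n (q n) = F 0 (q 0)" for n
  proof (induction n)
    case (Suc n)
    have "F (Suc n) (q (Suc n)) = F n (q n)" unfolding qS using ch[of n "q n"] by blast
    then show ?case using Suc by simp
  qed simp
  have Fpi: "F n \<pi> = F 0 (q 0)" for n
  proof -
    have "ext d n \<pi> = ext d n (q n)" using agree2[of n] by (rule ext_cong)
    then show ?thesis using Fq[of n] unfolding F_def by simp
  qed
  have ks: "knock_seq d \<pi>"
    unfolding knock_seq_def \<pi>_def using ch by (simp add: qS)
  have F0: "F 0 (q 0) \<le> E \<pi>'" if "knock_seq d \<pi>'" for \<pi>'
    unfolding F_def by (rule INF_lower) (simp add: ext_def that)
  let ?g = "\<lambda>\<pi> t. ennreal (measure_pmf.prob (open_hist \<phi> \<pi> t) {hs. last hs \<noteq> {1..d}})"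
  have part: "(\<Sum>t<N. ?g \<pi> t) \<le> F 0 (q 0)" for N
  proof -
    have "(\<Sum>t<N. ?g \<pi> t) \<le> E \<pi>'" if "\<pi>' \<in> ext d N \<pi>" for \<pi>'
    proof -
      have "(\<Sum>t<N. ?g \<pi> t) = (\<Sum>t<N. ?g \<pi>' t)"
      proof (rule sum.cong[OF refl])
        fix t assume "t \<in> {..<N}"
        then have "\<forall>j<t. \<pi> j = \<pi>' j" using that by (auto simp: ext_def)
        then have "open_hist \<phi> \<pi> t = open_hist \<phi> \<pi>' t" by (rule hist_dep)
        then show "?g \<pi> t = ?g \<pi>' t" by simp
      qed
      also have "\<dots> \<le> E \<pi>'" unfolding E_def expected_knocks_def by (rule sum_le_suminf) auto
      finally show ?thesis .
    qed
    then have "(\<Sum>t<N. ?g \<pi> t) \<le> F N \<pi>" unfolding F_def by (rule INF_greatest)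
    then show ?thesis using Fpi by simp
  qed
  have "E \<pi> \<le> F 0 (q 0)"
    unfolding E_def expected_knocks_def suminf_eq_SUP by (rule SUP_least) (rule part)
  then show ?thesis using ks F0 unfolding E_def by (meson order_trans)
qed
end
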